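(* Let $G$ be a graph obtained by taking a disjoint union of complete graphs $K_{n_1}\cup\cdots\cup K_{n_\ell}$ with each $n_i\ge 2$ and adding edges between distinct cliques such that the added edges form a matching. Then $G$ is well-bicovered.
   Context: All graphs are finite and simple; "subgraph" means induced subgraph. A graph is well-bicovered if every vertex-inclusion-maximal induced bipartite subgraph has the same order. *)

theory Defs
  imports Main "HOL-Library.Disjoint_Sets"
begin

text \<open>A finite simple graph is given by a finite vertex set V and a symmetric,
irreflexive edge relation E on V. Subgraphs are induced, so they are given by
vertex subsets.\<close>

definition induced_bipartite :: "('a \<Rightarrow> 'a \<Rightarrow> bool) \<Rightarrow> 'a set \<Rightarrow> bool" where
  "induced_bipartite E S \<longleftrightarrow>
     (\<exists>A B. S = A \<union> B \<and> A \<inter> B = {} \<and>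
            (\<forall>u\<in>A. \<forall>v\<in>A. \<not> E u v) \<and> (\<forall>u\<in>B. \<forall>v\<in>B. \<not> E u v))"

definition maximal_induced_bipartite :: "'a set \<Rightarrow> ('a \<Rightarrow> 'a \<Rightarrow> bool) \<Rightarrow> 'a set \<Rightarrow> bool" where
  "maximal_induced_bipartite V E S \<longleftrightarrow>
     S \<subseteq> V \<and> induced_bipartite E S \<and>
     (\<forall>T. S \<subset> T \<and> T \<subseteq> V \<longrightarrow> \<not> induced_bipartite E T)"

definition well_bicovered :: "'a set \<Rightarrow> ('a \<Rightarrow> 'a \<Rightarrow> bool) \<Rightarrow> bool" where
  "well_bicovered V E \<longleftrightarrow>
     (\<forall>S T. maximal_induced_bipartite V E S \<longrightarrow> maximal_induced_bipartite V E T
            \<longrightarrow> card S = card T)"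

end

theory Submission imports Defs begin

definition "symr r \<longleftrightarrow> (\<forall>u v. r u v \<longrightarrow> r v u)"
definition "irr r \<longleftrightarrow> (\<forall>u. \<not> r u u)"
definition "funr r \<longleftrightarrow> (\<forall>u v w. r u v \<longrightarrow> r u w \<longrightarrow> v = w)"

lemma contract_step:
  assumes xS: "x \<in> S" and yS: "y \<in> S" and cxy: "c x y"
    and sc: "symr c" and ic: "irr c" and fc: "funr c"
    and sm: "symr m" and im: "irr m" and fm: "funr m"
    and IH: "\<And>m'. symr m' \<Longrightarrow> irr m' \<Longrightarrow> funr m' \<Longrightarrow>
       \<exists>f::'a\<Rightarrow>bool. \<forall>u\<in>S-{x,y}. \<forall>v\<in>S-{x,y}. (c u v \<or> m' u v) \<longrightarrow> f u \<noteq> f v"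
  shows "\<exists>f::'a\<Rightarrow>bool. \<forall>u\<in>S. \<forall>v\<in>S. (c u v \<or> m u v) \<longrightarrow> f u \<noteq> f v"
proof -
  define S' where "S' = S - {x,y}"
  have xy: "x \<noteq> y" using ic cxy unfolding irr_def by auto
  define ea where "ea = (\<exists>a\<in>S'. m x a)"
  define eb where "eb = (\<exists>b\<in>S'. m y b)"
  define a where "a = (SOME a. a\<in>S' \<and> m x a)"
  define b where "b = (SOME b. b\<in>S' \<and> m y b)"
  have a: "ea \<Longrightarrow> a \<in> S' \<and> m x a" unfolding ea_def a_def by (metis (mono_tags, lifting) someI_ex)
  have b: "eb \<Longrightarrow> b \<in> S' \<and> m y b" unfolding eb_def b_def by (metis (mono_tags, lifting) someI_ex)
  have ab: "ea \<Longrightarrow> eb \<Longrightarrow> a \<noteq> b" using a b sm fm xy unfolding symr_def funr_def by metis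
  define m' where "m' = (\<lambda>u v. (m u v \<and> u \<notin> {x,y} \<and> v \<notin> {x,y}) \<or> (ea \<and> eb \<and> ((u = a \<and> v = b) \<or> (u = b \<and> v = a))))"
  have "symr m'" using sm unfolding symr_def m'_def by blast
  moreover have "irr m'" using im ab unfolding irr_def m'_def by blast
  moreover have "funr m'"
  proof -
    have ax: "ea \<Longrightarrow> m a x" using a sm unfolding symr_def by blast
    have by': "eb \<Longrightarrow> m b y" using b sm unfolding symr_def by blast
    have "v = w" if "m' u v" "m' u w" for u v w
      using that ax by' fm ab unfolding m'_def funr_def by auto
    then show ?thesis unfolding funr_def by blast
  qed
  ultimately obtain f' :: "'a \<Rightarrow> bool" where f': "\<forall>u\<in>S'. \<forall>v\<in>S'. (c u v \<or> m' u v) \<longrightarrow> f' u \<noteq> f' v"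
    using IH unfolding S'_def by blast
  define p where "p = (if ea then \<not> f' a else if eb then f' b else True)"
  define f where "f = (\<lambda>z. if z = x then p else if z = y then \<not> p else f' z)"
  have fab: "ea \<Longrightarrow> eb \<Longrightarrow> f' a \<noteq> f' b" using f' a b unfolding m'_def by blast
  have key: "f u \<noteq> f v" if uS: "u \<in> S" and vS: "v \<in> S" and e: "c u v \<or> m u v" for u v
  proof -
    have cx: "c x z \<Longrightarrow> z = y" for z using fc cxy unfolding funr_def by blast
    have cy: "c y z \<Longrightarrow> z = x" for z using fc sc cxy unfolding funr_def symr_def by blast
    have mx: "m x z \<Longrightarrow> z \<in> S \<Longrightarrow> z \<noteq> y \<Longrightarrow> ea \<and> z = a" for z
      using a fm im unfolding ea_def S'_def funr_def irr_def by blast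
    have my: "m y z \<Longrightarrow> z \<in> S \<Longrightarrow> z \<noteq> x \<Longrightarrow> eb \<and> z = b" for z
      using b fm im unfolding eb_def S'_def funr_def irr_def by blast
    have mxy: "m x y \<Longrightarrow> \<not> ea \<and> \<not> eb"
      using a b fm sm unfolding funr_def symr_def S'_def by blast
    have ux: "f x \<noteq> f z" if "z \<in> S" "c x z \<or> m x z" for z
    proof -
      have "z \<noteq> x" using that ic im unfolding irr_def by blast
      show ?thesis
      proof (cases "z = y")
        case True then show ?thesis using xy unfolding f_def by simp
      next
        case False
        then have "m x z" using that cx by blast
        then have "ea \<and> z = a" using mx that False by blast
        then show ?thesis using `z \<noteq> x` False a unfolding f_def p_def by (auto simp: S'_def)
      qed
    qed
    have uy: "f y \<noteq> f z" if "z \<in> S" "c y z \<or> m y z" for z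
    proof -
      have "z \<noteq> y" using that ic im unfolding irr_def by blast
      show ?thesis
      proof (cases "z = x")
        case True then show ?thesis using xy unfolding f_def by simp
      next
        case False
        then have "m y z" using that cy by blast
        then have "eb \<and> z = b" using my that False by blast
        moreover have "z \<noteq> y" by fact
        ultimately show ?thesis using False b fab xy unfolding f_def p_def by (auto simp: S'_def)
      qed
    qed
    have e': "c v u \<or> m v u" using e sc sm unfolding symr_def by blast
    show ?thesis
    proof (cases "u \<in> {x,y} \<or> v \<in> {x,y}")
      case True
      then show ?thesis using ux uy uS vS e e' by (metis insertE singletonD)
    next
      case False
      then have "u \<in> S'" "v \<in> S'" using uS vS unfolding S'_def by auto
      moreover have "c u v \<or> m' u v" using e False unfolding m'_def by blast
      ultimately show ?thesis using f' False unfolding f_def by auto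
    qed
  qed
  then show ?thesis by blast
qed

lemma two_match_color:
  "finite S \<Longrightarrow> symr c \<Longrightarrow> irr c \<Longrightarrow> funr c \<Longrightarrow> symr m \<Longrightarrow> irr m \<Longrightarrow> funr m \<Longrightarrow>
   \<exists>f::'a\<Rightarrow>bool. \<forall>u\<in>S. \<forall>v\<in>S. (c u v \<or> m u v) \<longrightarrow> f u \<noteq> f v"
proof (induction "card S" arbitrary: S c m rule: less_induct)
  case less
  show ?case
  proof (cases "\<exists>x\<in>S. \<exists>y\<in>S. c x y \<or> m x y")
    case False then show ?thesis by blast
  next
    case True
    then obtain x y where xy: "x \<in> S" "y \<in> S" "c x y \<or> m x y" by blast
    have card: "card (S - {x,y}) < card S" using xy less.prems(1)
      by (intro psubset_card_mono) auto
    have fin: "finite (S - {x,y})" using less.prems(1) by simp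
    show ?thesis
    proof (cases "c x y")
      case True
      show ?thesis
        apply (rule contract_step[OF xy(1,2) True less.prems(2-7)])
        using less.hyps[OF card fin] less.prems(2-4) by blast
    next
      case False
      then have "m x y" using xy by blast
      have "\<exists>f::'a\<Rightarrow>bool. \<forall>u\<in>S. \<forall>v\<in>S. (m u v \<or> c u v) \<longrightarrow> f u \<noteq> f v"
        apply (rule contract_step[OF xy(1,2) `m x y` less.prems(5-7) less.prems(2-4)])
        using less.hyps[OF card fin] less.prems(5-7) by blast
      then show ?thesis by blast
    qed
  qed
qed

theorem mainTheorem14:
  fixes V :: "'a set" and P :: "'a set set"
    and M :: "'a \<Rightarrow> 'a \<Rightarrow> bool" and E :: "'a \<Rightarrow> 'a \<Rightarrow> bool"
  assumes finV: "finite V"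
    and part: "partition_on V P"
    and cliques_ge2: "\<forall>C\<in>P. card C \<ge> 2"
    and M_sym: "\<forall>u v. M u v \<longrightarrow> M v u"
    and M_in_V: "\<forall>u v. M u v \<longrightarrow> u \<in> V \<and> v \<in> V"
    and M_between: "\<forall>u v. M u v \<longrightarrow> \<not> (\<exists>C\<in>P. u \<in> C \<and> v \<in> C)"
    and M_matching: "\<forall>u v w. M u v \<longrightarrow> M u w \<longrightarrow> v = w"
    and E_def: "\<forall>u v. E u v \<longleftrightarrow> ((\<exists>C\<in>P. u \<in> C \<and> v \<in> C) \<and> u \<noteq> v) \<or> M u v"
  shows "well_bicovered V E"
proof -
  have Eiff: "\<And>u v. E u v \<longleftrightarrow> ((\<exists>C\<in>P. u \<in> C \<and> v \<in> C) \<and> u \<noteq> v) \<or> M u v" using E_def by blast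
  have UP: "\<Union>P = V" using partition_onD1[OF part] by simp
  have uniq: "C = C'" if "C \<in> P" "C' \<in> P" "u \<in> C" "u \<in> C'" for C C' u
    using partition_onD2[OF part] that unfolding disjoint_def by blast
  have finC: "finite C" if "C \<in> P" for C using that UP finV
    by (meson Union_upper finite_subset)
  have finP: "finite P" using UP finV finite_UnionD by blast
  have L1: "card (S \<inter> C) \<le> 2" if bip: "induced_bipartite E S" and C: "C \<in> P" for S C
  proof (rule ccontr)
    assume "\<not> card (S \<inter> C) \<le> 2"
    then have "3 \<le> card (S \<inter> C)" by simp
    then obtain T where T: "T \<subseteq> S \<inter> C" "card T = 3" by (meson obtain_subset_with_card_n)
    then obtain x y z where xyz: "T = {x,y,z}" "x \<noteq> y" "y \<noteq> z" "x \<noteq> z" by (auto simp: card_3_iff)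
    have Exy: "E x y" "E y z" "E x z" using xyz T C unfolding Eiff by blast+
    obtain A B where AB: "S = A \<union> B" "A \<inter> B = {}" "\<forall>u\<in>A. \<forall>v\<in>A. \<not> E u v" "\<forall>u\<in>B. \<forall>v\<in>B. \<not> E u v"
      using bip unfolding induced_bipartite_def by blast
    have "x \<in> S" "y \<in> S" "z \<in> S" using T xyz by auto
    then show False using AB(1,3,4) Exy by (metis Un_iff)
  qed
  have L2: "induced_bipartite E S" if SV: "S \<subseteq> V" and le2: "\<forall>C\<in>P. card (S \<inter> C) \<le> 2" for S
  proof -
    define c where "c = (\<lambda>u v. u \<in> S \<and> v \<in> S \<and> u \<noteq> v \<and> (\<exists>C\<in>P. u \<in> C \<and> v \<in> C))"
    have finS: "finite S" using SV finV finite_subset by blast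
    have "symr c" unfolding c_def symr_def by blast
    moreover have "irr c" unfolding c_def irr_def by blast
    moreover have "funr c"
      unfolding funr_def
    proof (intro allI impI, rule ccontr)
      fix u v w assume cuv: "c u v" and cuw: "c u w" and vw: "v \<noteq> w"
      obtain C where C: "C \<in> P" "u \<in> C" "v \<in> C" "u \<in> S" "v \<in> S" "u \<noteq> v" using cuv c_def by blast
      obtain C' where C': "C' \<in> P" "u \<in> C'" "w \<in> C'" "w \<in> S" "u \<noteq> w" using cuw c_def by blast
      have "C' = C" using uniq C C' by blast
      then have sub: "{u,v,w} \<subseteq> S \<inter> C" using C C' by auto
      have "card {u,v,w} = 3" using C C' vw by (auto simp: card_3_iff)
      moreover have "card {u,v,w} \<le> card (S \<inter> C)" using sub finC[OF C(1)] by (intro card_mono) auto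
      ultimately show False using le2 C(1) by fastforce
    qed
    moreover have "symr M" using M_sym unfolding symr_def by blast
    moreover have "irr M" unfolding irr_def
    proof
      fix u show "\<not> M u u"
      proof
        assume "M u u"
        then have "u \<in> V" using M_in_V by blast
        then obtain C where "C \<in> P" "u \<in> C" using UP by blast
        then show False using M_between `M u u` by blast
      qed
    qed
    moreover have "funr M" using M_matching unfolding funr_def by blast
    ultimately obtain f :: "'a \<Rightarrow> bool" where f: "\<forall>u\<in>S. \<forall>v\<in>S. (c u v \<or> M u v) \<longrightarrow> f u \<noteq> f v"
      using two_match_color[OF finS] by blast
    have "\<forall>u\<in>S. \<forall>v\<in>S. E u v \<longrightarrow> f u \<noteq> f v" 
    proof (intro ballI impI)
      fix u v assume uv: "u \<in> S" "v \<in> S" "E u v"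
      then have "c u v \<or> M u v" unfolding Eiff c_def by blast
      then show "f u \<noteq> f v" using f uv by blast
    qed
    then show ?thesis unfolding induced_bipartite_def
      by (intro exI[of _ "{x\<in>S. f x}"] exI[of _ "{x\<in>S. \<not> f x}"]) auto
  qed
  have L3: "card (S \<inter> C) = 2" if mx: "maximal_induced_bipartite V E S" and C: "C \<in> P" for S C
  proof (rule ccontr)
    assume ne: "card (S \<inter> C) \<noteq> 2"
    have SV: "S \<subseteq> V" and bip: "induced_bipartite E S"
      and max: "\<forall>T. S \<subset> T \<and> T \<subseteq> V \<longrightarrow> \<not> induced_bipartite E T"
      using mx unfolding maximal_induced_bipartite_def by auto
    have lt: "card (S \<inter> C) < 2" using L1[OF bip C] ne by simp
    have "\<not> C \<subseteq> S"
    proof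
      assume "C \<subseteq> S" then have "S \<inter> C = C" by blast
      then show False using lt cliques_ge2 C by auto
    qed
    then obtain v where v: "v \<in> C" "v \<notin> S" by blast
    have vV: "v \<in> V" using v C UP by blast
    define T where "T = insert v S"
    have "\<forall>C'\<in>P. card (T \<inter> C') \<le> 2"
    proof
      fix C' assume C': "C' \<in> P"
      show "card (T \<inter> C') \<le> 2"
      proof (cases "v \<in> C'")
        case True
        then have "C' = C" using uniq C C' v by blast
        then have "T \<inter> C' = insert v (S \<inter> C)" using v unfolding T_def by blast
        then have "card (T \<inter> C') \<le> Suc (card (S \<inter> C))" using finC[OF C] 
          by (simp add: card_insert_le_m1)
        then show ?thesis using lt by simp
      next
        case False
        then have "T \<inter> C' = S \<inter> C'" unfolding T_def by blast
        then show ?thesis using L1[OF bip C'] by simp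
      qed
    qed
    moreover have "T \<subseteq> V" using SV vV T_def by blast
    ultimately have "induced_bipartite E T" using L2 by blast
    moreover have "S \<subset> T" using v T_def by blast
    ultimately show False using max `T \<subseteq> V` by blast
  qed
  have card: "card S = 2 * card P" if mx: "maximal_induced_bipartite V E S" for S
  proof -
    have SV: "S \<subseteq> V" using mx unfolding maximal_induced_bipartite_def by auto
    have "S = \<Union>((\<lambda>C. S \<inter> C) ` P)" using SV UP by blast
    then have "card S = (\<Sum>C\<in>P. card (S \<inter> C))"
    proof -
      have d: "\<forall>i\<in>P. \<forall>j\<in>P. i \<noteq> j \<longrightarrow> (S \<inter> i) \<inter> (S \<inter> j) = {}" using uniq by blast
      have f: "\<forall>i\<in>P. finite (S \<inter> i)" using finC by blast
      show ?thesis using card_UN_disjoint[OF finP f d] `S = _` by simp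
    qed
    also have "\<dots> = (\<Sum>C\<in>P. 2)" using L3[OF mx] by simp
    finally show ?thesis by simp
  qed
  show ?thesis unfolding well_bicovered_def using card by simp
qed

end
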